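(* Let $d\ge1$, $s\in[1/2,1)$, $L_0\ge 2$, and let $u:B_1\to\mathbb{R}$ be Lipschitz with $|u|\le 1$ and $\|\nabla u\|_{L^\infty(B_1)}\le L_0$, where $B_1\subset\mathbb{R}^d$ is the unit ball. Then $$\int_{B_1}\int_{B_1}\frac{|u(x)-u(y)|^2}{|x-y|^{d+2s}}\,dx\,dy\le\frac{1}{1-s}\,d\,\omega_d\,L_0^{2s-1}\Big((2-2s)\log(2L_0)+1\Big)\int_{B_1}|\nabla u(x)|\,dx,$$ where $\omega_d$ is the volume of the unit ball in $\mathbb{R}^d$. In particular the left side is at most $C(d,s)L_0^{2s-1}\log(L_0)\int_{B_1}|\nabla u|\,dx$. *)

theory Defs
  imports "HOL-Analysis.Analysis"
begin

end

theory Submission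
  imports Defs
begin


lemma ftc_pow:
  fixes a R :: real and d :: nat
  assumes "0 \<le> a" "a \<le> R" "d \<ge> 1"
  shows "((\<lambda>r. real d * w * r^(d-1)) has_integral (w * R^d - w * a^d)) {a..R}"
proof -
  have "((\<lambda>r. real d * w * r^(d-1)) has_integral ((\<lambda>r. w * r^d) R - (\<lambda>r. w * r^d) a)) {a..R}"
  proof (rule fundamental_theorem_of_calculus)
    show "a \<le> R" by fact
    fix x assume "x \<in> {a..R}"
    show "((\<lambda>r. w * r ^ d) has_vector_derivative real d * w * x ^ (d - 1)) (at x within {a..R})"
      unfolding has_real_derivative_iff_has_vector_derivative[symmetric]
      by (rule derivative_eq_intros refl | simp)+
  qed
  then show ?thesis by simp
qed

lemma polar_measure:
  assumes R: "R > 0"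
  defines "w \<equiv> measure lborel (ball (0::'a::euclidean_space) 1)"
  shows "distr (density lborel (indicator (ball (0::'a) R))) borel norm
       = density lborel (\<lambda>r. indicator {0..<R} r * ennreal (real DIM('a) * w * r^(DIM('a)-1)))"
    (is "?M1 = ?M2")
proof (rule measure_eqI_lessThan)
  show "sets ?M1 = sets borel" "sets ?M2 = sets borel" by auto
  have w0: "w \<ge> 0" unfolding w_def by simp
  have ball: "emeasure lborel (ball (0::'a) r) = ennreal (w * r^DIM('a))" if "r \<ge> 0" for r
    using content_ball_conv_unit_ball[of r "0::'a"] that emeasure_lborel_ball_finite[of "0::'a" r]
    by (simp add: emeasure_eq_ennreal_measure w_def mult.commute)
  have cball: "emeasure lborel (cball (0::'a) r) = ennreal (w * r^DIM('a))" if "r \<ge> 0" for r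
    using ball[OF that] emeasure_cball[OF that, of "0::'a"] emeasure_ball[OF that, of "0::'a"] by simp
  have M1: "emeasure ?M1 {x<..} = ennreal (w * R^DIM('a) - w * (max 0 (min x R))^DIM('a))" for x
  proof -
    have dens: "emeasure (density lborel (indicator (ball (0::'a) R))) (norm -` {x<..}) = emeasure lborel (ball (0::'a) R - cball 0 x)"
    proof -
      have "emeasure (density lborel (indicator (ball (0::'a) R))) (norm -` {x<..})
          = (\<integral>\<^sup>+h. indicator (ball (0::'a) R) h * indicator (norm -` {x<..}) h \<partial>lborel)"
        by (rule emeasure_density) (auto intro!: borel_open open_vimage continuous_intros borel_measurable_indicator)
      also have "\<dots> = (\<integral>\<^sup>+h. indicator (ball (0::'a) R - cball 0 x) h \<partial>lborel)"
        by (rule nn_integral_cong) (auto simp: indicator_def)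
      also have "\<dots> = emeasure lborel (ball (0::'a) R - cball 0 x)"
        by (rule nn_integral_indicator) auto
      finally show ?thesis .
    qed
    have "emeasure ?M1 {x<..} = emeasure (density lborel (indicator (ball (0::'a) R))) (norm -` {x<..})"
      by (subst emeasure_distr) auto
    also have "\<dots> = emeasure lborel (ball (0::'a) R - cball 0 x)" by (rule dens)
    also have "\<dots> = ennreal (w * R^DIM('a) - w * (max 0 (min x R))^DIM('a))"
    proof (cases "x < 0")
      case True
      then have "ball (0::'a) R - cball 0 x = ball 0 R" by auto
      then show ?thesis using True R ball[of R] by (simp add: power_0_left)
    next
      case False
      show ?thesis
      proof (cases "x < R")
        case True
        have "emeasure lborel (ball (0::'a) R - cball 0 x) = emeasure lborel (ball (0::'a) R) - emeasure lborel (cball (0::'a) x)"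
          using True False by (intro emeasure_Diff) (use emeasure_lborel_cball_finite[of "0::'a" x] in auto)
        also have "\<dots> = ennreal (w * R^DIM('a) - w * x^DIM('a))"
          using True False R by (simp add: ball cball ennreal_minus w0 power_mono mult_left_mono)
        finally show ?thesis using True False by simp
      next
        case False': False
        then have "ball (0::'a) R - cball 0 x = {}" by auto
        then have "emeasure lborel (ball (0::'a) R - cball 0 x) = 0" by (simp only: emeasure_empty)
        moreover have "max 0 (min x R) = R" using False' R by simp
        ultimately show ?thesis by simp
      qed
    qed
    finally show ?thesis .
  qed
  have M2: "emeasure ?M2 {x<..} = ennreal (w * R^DIM('a) - w * (max 0 (min x R))^DIM('a))" for x
  proof -
    define a where "a = max 0 (min x R)"
    have "emeasure ?M2 {x<..} = (\<integral>\<^sup>+r. indicator {0..<R} r * ennreal (real DIM('a) * w * r^(DIM('a)-1)) * indicator {x<..} r \<partial>lborel)"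
      by (subst emeasure_density) auto
    also have "\<dots> = (\<integral>\<^sup>+r. indicator {a..R} r * ennreal (real DIM('a) * w * r^(DIM('a)-1)) \<partial>lborel)"
    proof (rule nn_integral_cong_AE)
      have "AE r in lborel. r \<noteq> a \<and> r \<noteq> R \<and> r \<noteq> 0"
        by (intro AE_conjI AE_lborel_singleton)
      then show "AE r in lborel. indicator {0..<R} r * ennreal (real DIM('a) * w * r ^ (DIM('a) - 1)) * indicator {x<..} r =
           indicator {a..R} r * ennreal (real DIM('a) * w * r ^ (DIM('a) - 1))"
        by eventually_elim (auto simp: a_def indicator_def)
    qed
    also have "\<dots> = ennreal (w * R^DIM('a) - w * a^DIM('a))"
      using nn_integral_has_integral_lebesgue[OF _ ftc_pow[of a R "DIM('a)" w]] R w0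
      by (auto simp: a_def indicator_mult_ennreal)
    finally show ?thesis by (simp add: a_def)
  qed
  fix x show "emeasure ?M1 {x<..} < \<infinity>" "emeasure ?M1 {x<..} = emeasure ?M2 {x<..}"
    using M1 M2 by auto
qed

lemma polar_nn_integral:
  fixes f :: "real \<Rightarrow> ennreal"
  assumes R: "R > 0" and f[measurable]: "f \<in> borel_measurable borel"
  shows "(\<integral>\<^sup>+h. indicator (ball (0::'a::euclidean_space) R) h * f (norm h) \<partial>lborel)
       = (\<integral>\<^sup>+r. indicator {0..<R} r * ennreal (real DIM('a) * measure lborel (ball (0::'a) 1) * r^(DIM('a)-1)) * f r \<partial>lborel)"
proof -
  have "(\<integral>\<^sup>+h. indicator (ball (0::'a) R) h * f (norm h) \<partial>lborel)
      = (\<integral>\<^sup>+h. f (norm h) \<partial>density lborel (indicator (ball (0::'a) R)))"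
    by (subst nn_integral_density) (auto intro!: borel_measurable_indicator borel_open)
  also have "\<dots> = (\<integral>\<^sup>+r. f r \<partial>distr (density lborel (indicator (ball (0::'a) R))) borel norm)"
    by (subst nn_integral_distr) auto
  also have "\<dots> = (\<integral>\<^sup>+r. f r \<partial>density lborel (\<lambda>r. indicator {0..<R} r * ennreal (real DIM('a) * measure lborel (ball (0::'a) 1) * r^(DIM('a)-1))))"
    using polar_measure[OF R, where 'a='a] by simp
  also have "\<dots> = (\<integral>\<^sup>+r. indicator {0..<R} r * ennreal (real DIM('a) * measure lborel (ball (0::'a) 1) * r^(DIM('a)-1)) * f r \<partial>lborel)"
    by (subst nn_integral_density) auto
  finally show ?thesis .
qed




lemma radial_real_bound:
  fixes s L0 w :: real and d :: nat
  assumes s: "1/2 \<le> s" "s < 1" and L0: "L0 \<ge> 2" and w: "w \<ge> 0"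
  defines "a \<equiv> 2 / L0"
  shows "real d * w * (L0 * (a powr (2 - 2 * s) / (2 - 2 * s)) + 2 * a powr (1 - 2 * s) * (ln 2 - ln a))
       \<le> 1/(1-s) * real d * w * L0 powr (2 * s-1) * ((2-2 * s) * ln(2*L0) + 1)"
proof -
  have L0p: "L0 > 0" using L0 by simp
  have e1: "L0 powr (2 * s - 1) = L0 / L0 powr (2 - 2 * s)"
  proof -
    have "L0 powr (2 * s - 1) = L0 powr (1 - (2 - 2 * s))" by (simp add: algebra_simps)
    also have "\<dots> = L0 / L0 powr (2 - 2 * s)" using L0p by (metis powr_diff powr_one less_imp_le)
    finally show ?thesis .
  qed
  have e2: "L0 powr (2 * s - 1) = 1 / L0 powr (1 - 2 * s)"
  proof -
    have "L0 powr (2 * s - 1) = L0 powr (- (1 - 2 * s))" by (simp add: algebra_simps)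
    also have "\<dots> = 1 / L0 powr (1 - 2 * s)" by (simp only: powr_minus inverse_eq_divide)
    finally show ?thesis .
  qed
  have a1: "L0 * a powr (2 - 2 * s) = 2 powr (2 - 2 * s) * L0 powr (2 * s - 1)"
    unfolding a_def e1 using L0p by (simp add: powr_divide)
  have a2: "a powr (1 - 2 * s) = 2 powr (1 - 2 * s) * L0 powr (2 * s - 1)"
    unfolding a_def e2 using L0p by (simp add: powr_divide)
  have "2 powr (1 - 2 * s) \<le> (2::real) powr 0" by (rule powr_mono) (use s in auto)
  then have t1: "2 powr (1 - 2 * s) \<le> 1" by simp
  have lna: "ln 2 - ln a = ln L0" using L0p by (simp add: a_def ln_div)
  have first: "L0 * (a powr (2 - 2 * s) / (2 - 2 * s)) \<le> L0 powr (2 * s-1) / (1 - s)"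
  proof -
    have "L0 * (a powr (2 - 2 * s) / (2 - 2 * s)) = 2 powr (1 - 2 * s) * L0 powr (2 * s - 1) / (1 - s)"
    proof -
      have p2: "(2::real) powr (2 - 2 * s) = 2 * 2 powr (1 - 2 * s)"
        by (metis (no_types) add_diff_eq diff_add_eq powr_add powr_one zero_le_numeral one_add_one diff_diff_eq2)
      have "L0 * (a powr (2 - 2 * s) / (2 - 2 * s)) = (L0 * a powr (2 - 2 * s)) / (2 * (1 - s))" by simp
      also have "\<dots> = 2 * 2 powr (1 - 2 * s) * L0 powr (2 * s - 1) / (2 * (1 - s))" by (simp only: a1 p2)
      also have "\<dots> = 2 powr (1 - 2 * s) * L0 powr (2 * s - 1) / (1 - s)" by (metis (no_types) mult.assoc mult_divide_mult_cancel_left_if zero_neq_numeral)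
      finally show ?thesis .
    qed
    also have "\<dots> \<le> 1 * L0 powr (2 * s - 1) / (1 - s)"
      using s t1 by (intro divide_right_mono mult_right_mono) auto
    finally show ?thesis by simp
  qed
  have second: "2 * a powr (1 - 2 * s) * (ln 2 - ln a) \<le> 2 * L0 powr (2 * s - 1) * ln (2 * L0)"
  proof -
    have "2 * a powr (1 - 2 * s) * (ln 2 - ln a) = 2 * (2 powr (1 - 2 * s) * L0 powr (2 * s - 1)) * ln L0"
      using a2 lna by simp
    also have "\<dots> \<le> 2 * (1 * L0 powr (2 * s - 1)) * ln (2 * L0)"
      using t1 L0 by (intro mult_mono mult_left_mono) auto
    finally show ?thesis by simp
  qed
  have "L0 * (a powr (2 - 2 * s) / (2 - 2 * s)) + 2 * a powr (1 - 2 * s) * (ln 2 - ln a)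
      \<le> L0 powr (2 * s-1) / (1 - s) + 2 * L0 powr (2 * s - 1) * ln (2 * L0)"
    using first second by linarith
  also have "\<dots> = 1/(1-s) * L0 powr (2 * s-1) * ((2-2 * s) * ln(2*L0) + 1)"
    using s by (simp add: field_simps)
  finally have "L0 * (a powr (2 - 2 * s) / (2 - 2 * s)) + 2 * a powr (1 - 2 * s) * (ln 2 - ln a)
      \<le> 1/(1-s) * L0 powr (2 * s-1) * ((2-2 * s) * ln(2*L0) + 1)" .
  from mult_left_mono[OF this, of "real d * w"] w show ?thesis by (simp add: mult_ac)
qed




lemma radial_pointwise:
  fixes s L0 w r :: real and d :: nat
  assumes s: "1/2 \<le> s" "s < 1" and L0: "L0 \<ge> 2" and w: "w \<ge> 0" and d: "d \<ge> 1"
  defines "a \<equiv> 2 / L0"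
  assumes r: "0 \<le> r" "r < 2"
  shows "real d * w * r^(d-1) * (min 2 (L0*r) * r / r powr (real d + 2 * s))
      \<le> indicator {0..a} r * (real d * w * L0 * r powr (1 - 2 * s))
        + indicator {a..2} r * (real d * w * 2 * a powr (1 - 2 * s) * (1 / r))"
proof (cases "r = 0")
  case True then have "a > 0" using L0 by (simp add: a_def)
  then show ?thesis using True by (simp add: indicator_def)
next
  case False
  then have rp: "r > 0" using r by simp
  have L0p: "L0 > 0" using L0 by simp
  have key: "r^(d-1) * r / r powr (real d + 2 * s) = r powr (1 - 2 * s) / r"
  proof -
    have "r^(d-1) * r = r powr real d" using rp d
      using power_minus_mult[of d r] powr_realpow[OF rp, of d] by simp
    then have "r^(d-1) * r / r powr (real d + 2 * s) = r powr (real d - (real d + 2 * s))"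
      by (simp only: powr_diff)
    also have "\<dots> = r powr ((1 - 2 * s) - 1)" by (simp add: algebra_simps)
    also have "\<dots> = r powr (1 - 2 * s) / r" using rp by (metis powr_diff powr_one less_imp_le)
    finally show ?thesis .
  qed
  have lhs: "real d * w * r^(d-1) * (min 2 (L0*r) * r / r powr (real d + 2 * s))
      = real d * w * min 2 (L0*r) * (r powr (1 - 2 * s) / r)"
  proof -
    have "real d * w * r^(d-1) * (min 2 (L0*r) * r / r powr (real d + 2 * s))
      = real d * w * min 2 (L0*r) * (r^(d-1) * r / r powr (real d + 2 * s))"
      by (simp add: field_simps)
    then show ?thesis by (simp only: key)
  qed
  show ?thesis
  proof (cases "r \<le> a")
    case True
    then have "L0 * r \<le> 2" using L0p by (simp add: a_def field_simps)
    then have "min 2 (L0*r) = L0 * r" by simp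
    then have "real d * w * r^(d-1) * (min 2 (L0*r) * r / r powr (real d + 2 * s))
        = real d * w * L0 * r powr (1 - 2 * s)" using lhs rp by simp
    moreover have "0 \<le> indicator {a..2} r * (real d * w * 2 * a powr (1 - 2 * s) * (1 / r))"
      using w rp by (simp add: indicator_def)
    ultimately show ?thesis using True rp by (simp add: indicator_def)
  next
    case False
    then have "L0 * r \<ge> 2" using L0p by (simp add: a_def field_simps)
    then have "min 2 (L0*r) = 2" by simp
    then have eq: "real d * w * r^(d-1) * (min 2 (L0*r) * r / r powr (real d + 2 * s))
        = real d * w * 2 * r powr (1 - 2 * s) * (1 / r)" using lhs rp by simp
    have ap: "a > 0" using L0p by (simp add: a_def)
    have "r powr (1 - 2 * s) \<le> a powr (1 - 2 * s)"
      using False ap s by (intro powr_mono2') auto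
    then have "real d * w * 2 * r powr (1 - 2 * s) * (1 / r) \<le> real d * w * 2 * a powr (1 - 2 * s) * (1 / r)"
      using w rp by (intro mult_right_mono mult_left_mono) auto
    then show ?thesis using eq False r by (simp add: indicator_def)
  qed
qed

lemma radial_nn_bound:
  fixes s L0 w :: real and d :: nat
  assumes s: "1/2 \<le> s" "s < 1" and L0: "L0 \<ge> 2" and w: "w \<ge> 0" and d: "d \<ge> 1"
  shows "(\<integral>\<^sup>+r. indicator {0..<2} r * ennreal (real d * w * r^(d-1)) * ennreal (min 2 (L0*r) * r / r powr (real d + 2 * s)) \<partial>lborel)
     \<le> ennreal (1/(1-s) * real d * w * L0 powr (2 * s - 1) * ((2 - 2 * s) * ln (2 * L0) + 1))"
proof -
  define a where "a = 2 / L0"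
  have L0p: "L0 > 0" using L0 by simp
  have ap: "0 < a" "a \<le> 2" using L0 by (auto simp: a_def field_simps)
  define f1 where "f1 r = real d * w * L0 * r powr (1 - 2 * s)" for r
  define f2 where "f2 r = real d * w * 2 * a powr (1 - 2 * s) * (1 / r)" for r :: real
  have I1: "(f1 has_integral (real d * w * L0 * (a powr (1 - 2 * s + 1) / (1 - 2 * s + 1)))) {0..a}"
    unfolding f1_def using s ap by (intro has_integral_mult_right has_integral_powr_from_0) auto
  have I2: "(f2 has_integral (real d * w * 2 * a powr (1 - 2 * s) * (ln 2 - ln a))) {a..2}"
    unfolding f2_def
  proof (intro has_integral_mult_right)
    have "((\<lambda>r. 1 / r) has_integral (ln 2 - ln a)) {a..2}"
    proof (rule fundamental_theorem_of_calculus)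
      show "a \<le> 2" by fact
      fix x assume "x \<in> {a..2}"
      then have "x > 0" using ap by auto
      then show "(ln has_vector_derivative 1 / x) (at x within {a..2})"
        unfolding has_real_derivative_iff_has_vector_derivative[symmetric]
        by (auto intro!: derivative_eq_intros)
    qed
    then show "((\<lambda>r. 1 / r) has_integral (ln 2 - ln a)) {a..2}" .
  qed
  have f1n: "0 \<le> f1 r" for r using w L0 by (simp add: f1_def)
  have f2n: "r \<in> {a..2} \<Longrightarrow> 0 \<le> f2 r" for r using w ap by (simp add: f2_def)
  have "(\<integral>\<^sup>+r. indicator {0..<2} r * ennreal (real d * w * r^(d-1)) * ennreal (min 2 (L0*r) * r / r powr (real d + 2 * s)) \<partial>lborel)
      \<le> (\<integral>\<^sup>+r. ennreal (indicator {0..a} r * f1 r) + ennreal (indicator {a..2} r * f2 r) \<partial>lborel)"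
  proof (rule nn_integral_mono)
    fix r :: real
    show "indicator {0..<2} r * ennreal (real d * w * r^(d-1)) * ennreal (min 2 (L0*r) * r / r powr (real d + 2 * s))
       \<le> ennreal (indicator {0..a} r * f1 r) + ennreal (indicator {a..2} r * f2 r)"
    proof (cases "0 \<le> r \<and> r < 2")
      case True
      have n1: "0 \<le> real d * w * r^(d-1)" using True w by simp
      have n2: "0 \<le> min 2 (L0*r) * r / r powr (real d + 2 * s)" using True L0 by simp
      have n3: "0 \<le> indicator {0..a} r * f1 r" using f1n by simp
      have n4: "0 \<le> indicator {a..2} r * f2 r" using f2n by (simp add: indicator_def)
      have "real d * w * r^(d-1) * (min 2 (L0*r) * r / r powr (real d + 2 * s))
          \<le> indicator {0..a} r * f1 r + indicator {a..2} r * f2 r"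
        using radial_pointwise[OF s L0 w d, of r] True unfolding f1_def f2_def a_def by simp
      then have "ennreal (real d * w * r^(d-1) * (min 2 (L0*r) * r / r powr (real d + 2 * s)))
          \<le> ennreal (indicator {0..a} r * f1 r) + ennreal (indicator {a..2} r * f2 r)"
        using n3 n4 by (simp add: ennreal_plus[symmetric] del: ennreal_plus)
      moreover have "ennreal (real d * w * r^(d-1)) * ennreal (min 2 (L0*r) * r / r powr (real d + 2 * s))
          = ennreal (real d * w * r^(d-1) * (min 2 (L0*r) * r / r powr (real d + 2 * s)))"
        using n1 n2 by (simp only: ennreal_mult)
      ultimately show ?thesis using True by simp
    qed simp
  qed
  also have "\<dots> = (\<integral>\<^sup>+r. ennreal (indicator {0..a} r * f1 r) \<partial>lborel) + (\<integral>\<^sup>+r. ennreal (indicator {a..2} r * f2 r) \<partial>lborel)"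
    by (rule nn_integral_add) (auto simp: f1_def f2_def)
  also have "\<dots> = ennreal (real d * w * L0 * (a powr (1 - 2 * s + 1) / (1 - 2 * s + 1))) + ennreal (real d * w * 2 * a powr (1 - 2 * s) * (ln 2 - ln a))"
    using nn_integral_has_integral_lebesgue[OF _ I1] nn_integral_has_integral_lebesgue[OF _ I2] f1n f2n by simp
  also have "\<dots> = ennreal (real d * w * (L0 * (a powr (2 - 2 * s) / (2 - 2 * s)) + 2 * a powr (1 - 2 * s) * (ln 2 - ln a)))"
  proof -
    have "0 \<le> real d * w * L0 * (a powr (1 - 2 * s + 1) / (1 - 2 * s + 1))" using w L0 s by simp
    moreover have "0 \<le> real d * w * 2 * a powr (1 - 2 * s) * (ln 2 - ln a)" using w ap by simp
    ultimately show ?thesis by (simp add: ennreal_plus[symmetric] algebra_simps del: ennreal_plus)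
  qed
  also have "\<dots> \<le> ennreal (1/(1-s) * real d * w * L0 powr (2 * s - 1) * ((2 - 2 * s) * ln (2 * L0) + 1))"
    using radial_real_bound[OF s L0 w, of d] by (intro ennreal_leI) (simp add: a_def)
  finally show ?thesis .
qed




lemma vec1_img: "(\<lambda>x::real^1. x$1) ` vec ` X = X"
  by (force simp: image_iff)

lemma vec1_integrable_iff:
  fixes f :: "real^1 \<Rightarrow> real"
  shows "f integrable_on (vec ` X) \<longleftrightarrow> (f \<circ> vec) integrable_on X"
proof
  assume "f integrable_on (vec ` X)"
  then obtain y where "(f has_integral y) (vec ` X)" by (auto simp: integrable_on_def)
  from has_integral_vec1_I[OF this] show "(f \<circ> vec) integrable_on X"
    by (auto simp: integrable_on_def vec1_img)
next
  assume "(f \<circ> vec) integrable_on X"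
  then obtain y where "((f \<circ> vec) has_integral y) ((\<lambda>x::real^1. x$1) ` vec ` X)"
    by (auto simp: integrable_on_def vec1_img)
  from has_integral_vec1_D[OF this] show "f integrable_on (vec ` X)"
    by (auto simp: integrable_on_def)
qed

lemma vec1_integral:
  fixes f :: "real^1 \<Rightarrow> real"
  shows "integral (vec ` X) f = integral X (f \<circ> vec)"
  using integral_vec1_eq[of "vec ` X" f] by (simp add: vec1_img)

lemma vec1_lmeasurable_iff: "(vec ` X :: (real^1) set) \<in> lmeasurable \<longleftrightarrow> (X::real set) \<in> lmeasurable"
  using vec1_integrable_iff[of "\<lambda>x. 1" X] by (simp add: lmeasurable_iff_integrable_on o_def)

lemma vec1_measure: "(X::real set) \<in> lmeasurable \<Longrightarrow> measure lebesgue (vec ` X :: (real^1) set) = measure lebesgue X"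
  using lmeasure_integral[of X] lmeasure_integral[of "vec ` X :: (real^1) set"] vec1_lmeasurable_iff[of X]
  by (simp add: vec1_integral o_def)

lemma image_measure_1d:
  fixes \<phi> \<phi>' :: "real \<Rightarrow> real"
  assumes S: "S \<in> lmeasurable"
    and der: "\<And>t. t \<in> S \<Longrightarrow> (\<phi> has_real_derivative \<phi>' t) (at t within S)"
    and int: "(\<lambda>t. \<bar>\<phi>' t\<bar>) integrable_on S"
  shows "\<phi> ` S \<in> lmeasurable \<and> measure lebesgue (\<phi> ` S) \<le> integral S (\<lambda>t. \<bar>\<phi>' t\<bar>)"
proof -
  let ?f = "\<lambda>v::real^1. vec (\<phi> (v$1)) :: real^1"
  let ?S = "vec ` S :: (real^1) set"
  have Sv: "?S \<in> lmeasurable" using S vec1_lmeasurable_iff by blast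
  have derv: "(?f has_derivative (*\<^sub>R) (\<phi>' (x$1))) (at x within ?S)" if "x \<in> ?S" for x
  proof -
    obtain t where t: "t \<in> S" "x = vec t" using \<open>x \<in> ?S\<close> by auto
    have "(\<phi> has_derivative (\<lambda>x. x * \<phi>' t)) (at t within S)"
      using der[OF t(1)] by (simp add: has_field_derivative_def mult_commute_abs)
    from has_derivative_vector_1[of \<phi> \<phi>' t S, OF this] show ?thesis using t by simp
  qed
  have intdet: "(\<lambda>x. \<bar>det (matrix ((*\<^sub>R) (\<phi>' (x$1)) :: real^1 \<Rightarrow> real^1))\<bar>) integrable_on ?S"
    unfolding vec1_integrable_iff using int by (simp add: o_def)
  from m_diff_image_weak[OF Sv derv intdet]
  have *: "?f ` ?S \<in> lmeasurable" "measure lebesgue (?f ` ?S) \<le> integral ?S (\<lambda>x. \<bar>det (matrix ((*\<^sub>R) (\<phi>' (x$1)) :: real^1 \<Rightarrow> real^1))\<bar>)"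
    by auto
  have eq: "?f ` ?S = vec ` (\<phi> ` S)" by (auto simp: image_image)
  have m: "\<phi> ` S \<in> lmeasurable" using *(1) unfolding eq vec1_lmeasurable_iff .
  moreover have "measure lebesgue (\<phi> ` S) \<le> integral S (\<lambda>t. \<bar>\<phi>' t\<bar>)"
    using *(2) unfolding eq vec1_measure[OF m] vec1_integral by (simp add: o_def)
  ultimately show ?thesis by blast
qed

lemma seg_ftc:
  fixes \<phi> \<phi>' :: "real \<Rightarrow> real" and Z :: "real set" and B :: real
  assumes Z: "Z \<in> null_sets lborel"
    and lip: "B-lipschitz_on {0..1} \<phi>"
    and der: "\<And>t. t \<in> {0<..<1} - Z \<Longrightarrow> (\<phi> has_real_derivative \<phi>' t) (at t)"
    and meas[measurable]: "\<phi>' \<in> borel_measurable borel"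
  shows "ennreal \<bar>\<phi> 1 - \<phi> 0\<bar> \<le> (\<integral>\<^sup>+t. indicator {0..1} t * ennreal \<bar>\<phi>' t\<bar> \<partial>lborel)"
proof (cases "(\<integral>\<^sup>+t. indicator {0..1} t * ennreal \<bar>\<phi>' t\<bar> \<partial>lborel) = \<infinity>")
  case True then show ?thesis by simp
next
  case False
  define A where "A = {0<..<1::real} - Z"
  have Zs: "Z \<in> sets borel" using Z by (auto simp: null_sets_def)
  have A_leb: "A \<in> sets lebesgue" unfolding A_def using Zs by auto
  have A_lm: "A \<in> lmeasurable"
    by (rule bounded_set_imp_lmeasurable[OF _ A_leb]) (rule bounded_subset[of "{0..1}"], auto simp: A_def)
  have intb: "integrable lborel (\<lambda>t. indicator {0..1} t *\<^sub>R \<bar>\<phi>' t\<bar>)"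
  proof (rule integrableI_bounded)
    show "(\<lambda>t. indicator {0..1} t *\<^sub>R \<bar>\<phi>' t\<bar>) \<in> borel_measurable lborel" by measurable
    have "(\<integral>\<^sup>+x. ennreal (norm (indicator {0..1} x *\<^sub>R \<bar>\<phi>' x\<bar>)) \<partial>lborel)
        = (\<integral>\<^sup>+t. indicator {0..1} t * ennreal \<bar>\<phi>' t\<bar> \<partial>lborel)"
      by (intro nn_integral_cong) (auto simp: indicator_def)
    then show "(\<integral>\<^sup>+x. ennreal (norm (indicator {0..1} x *\<^sub>R \<bar>\<phi>' x\<bar>)) \<partial>lborel) < \<infinity>"
      using False by (simp add: less_top)
  qed
  have si01: "set_integrable lebesgue {0..1} (\<lambda>t. \<bar>\<phi>' t\<bar>)"
    unfolding set_integrable_def using intb integrable_completion[of "\<lambda>t. indicator {0..1} t *\<^sub>R \<bar>\<phi>' t\<bar>" lborel]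
    by simp
  have siA: "set_integrable lebesgue A (\<lambda>t. \<bar>\<phi>' t\<bar>)"
    by (rule set_integrable_subset[OF si01 A_leb]) (auto simp: A_def)
  have intA: "(\<lambda>t. \<bar>\<phi>' t\<bar>) integrable_on A" using set_lebesgue_integral_eq_integral(1)[OF siA] .
  have int01: "(\<lambda>t. \<bar>\<phi>' t\<bar>) integrable_on {0..1}" using set_lebesgue_integral_eq_integral(1)[OF si01] .
  have derA: "(\<phi> has_real_derivative \<phi>' t) (at t within A)" if "t \<in> A" for t
    using der[of t] that by (auto simp: A_def intro: DERIV_subset)
  from image_measure_1d[OF A_lm derA intA]
  have imA: "\<phi> ` A \<in> lmeasurable" "measure lebesgue (\<phi> ` A) \<le> integral A (\<lambda>t. \<bar>\<phi>' t\<bar>)" by auto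
  define N0 where "N0 = {0..1::real} \<inter> (Z \<union> {0,1})"
  have N0null: "N0 \<in> null_sets lborel"
  proof -
    have "{0,1::real} \<in> null_sets lborel" by (rule finite_imp_null_set_lborel) simp
    then have "Z \<union> {0,1} \<in> null_sets lborel" using Z by (rule null_sets.Un[rotated])
    moreover have "{0..1} \<inter> (Z \<union> {0,1}) \<in> sets lborel"
      using Zs by (intro sets.Int sets.Un) auto
    ultimately show ?thesis unfolding N0_def by (rule null_sets_subset) auto
  qed
  have negN0: "negligible N0"
    unfolding negligible_iff_null_sets using null_sets_completionI[OF N0null] .
  have B0: "0 \<le> B" using lip by (simp add: lipschitz_on_def)
  have negim: "negligible (\<phi> ` N0)"
  proof (rule negligible_locally_Lipschitz_image[OF _ negN0])
    fix x assume "x \<in> N0"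
    then have x01: "x \<in> {0..1}" by (auto simp: N0_def)
    show "\<exists>T B. open T \<and> x \<in> T \<and> (\<forall>y\<in>N0 \<inter> T. norm (\<phi> y - \<phi> x) \<le> B * norm (y - x))"
    proof (intro exI conjI ballI)
      fix y assume "y \<in> N0 \<inter> UNIV"
      then have "y \<in> {0..1}" by (auto simp: N0_def)
      from lipschitz_onD[OF lip this x01] show "norm (\<phi> y - \<phi> x) \<le> B * norm (y - x)"
        by (simp add: dist_norm)
    qed auto
  qed auto
  have cont: "continuous_on {0..1} \<phi>" using lipschitz_on_continuous_on[OF lip] .
  have "connected (\<phi> ` {0..1})" by (rule connected_continuous_image[OF cont]) auto
  then have "convex (\<phi> ` {0..1})" by (simp add: is_interval_connected_1[symmetric] is_interval_convex_1)
  then have seg: "closed_segment (\<phi> 0) (\<phi> 1) \<subseteq> \<phi> ` {0..1}"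
    by (rule closed_segment_subset[rotated 2]) auto
  have "{0..1} \<subseteq> A \<union> N0" by (auto simp: A_def N0_def)
  then have cover: "\<phi> ` {0..1} \<subseteq> \<phi> ` A \<union> \<phi> ` N0" by (metis image_Un image_mono)
  have negim': "\<phi> ` N0 \<in> null_sets lebesgue" using negim negligible_iff_null_sets by blast
  have Un_lm: "\<phi> ` A \<union> \<phi> ` N0 \<in> lmeasurable"
    by (intro fmeasurable.Un imA(1) fmeasurableI_null_sets negim')
  have segm: "measure lebesgue (closed_segment (\<phi> 0) (\<phi> 1)) = \<bar>\<phi> 1 - \<phi> 0\<bar>"
    by (simp add: closed_segment_eq_real_ivl)
  have "\<bar>\<phi> 1 - \<phi> 0\<bar> \<le> measure lebesgue (\<phi> ` A \<union> \<phi> ` N0)"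
    unfolding segm[symmetric]
    by (rule measure_mono_fmeasurable[OF _ _ Un_lm]) (use seg cover in auto)
  also have "\<dots> = measure lebesgue (\<phi> ` A)"
    using imA(1) negim' by (intro measure_Un_null_set) auto
  also have "\<dots> \<le> integral A (\<lambda>t. \<bar>\<phi>' t\<bar>)" by (rule imA(2))
  also have "\<dots> \<le> integral {0..1} (\<lambda>t. \<bar>\<phi>' t\<bar>)"
    by (rule integral_subset_le) (use intA int01 in \<open>auto simp: A_def\<close>)
  finally have le: "\<bar>\<phi> 1 - \<phi> 0\<bar> \<le> integral {0..1} (\<lambda>t. \<bar>\<phi>' t\<bar>)" .
  have "(\<integral>\<^sup>+t. indicator {0..1} t * ennreal \<bar>\<phi>' t\<bar> \<partial>lborel) = ennreal (integral {0..1} (\<lambda>t. \<bar>\<phi>' t\<bar>))"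
    using nn_integral_has_integral_lebesgue[OF _ integrable_integral[OF int01]]
    by (simp add: indicator_mult_ennreal)
  then show ?thesis using le by (simp add: ennreal_leI)
qed




lemma line_deriv:
  fixes u :: "'a::euclidean_space \<Rightarrow> real"
  assumes "(u has_derivative (\<lambda>h. G \<bullet> h)) (at (x + t *\<^sub>R v))"
  shows "((\<lambda>t. u (x + t *\<^sub>R v)) has_real_derivative (G \<bullet> v)) (at t)"
proof -
  have l: "((\<lambda>t. x + t *\<^sub>R v) has_derivative (\<lambda>s. s *\<^sub>R v)) (at t)"
    by (auto intro!: derivative_eq_intros)
  have "(((\<lambda>y. u y) \<circ> (\<lambda>t. x + t *\<^sub>R v)) has_derivative ((\<lambda>h. G \<bullet> h) \<circ> (\<lambda>s. s *\<^sub>R v))) (at t)"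
    by (rule diff_chain_at[OF l]) (use assms in simp)
  moreover have "((\<lambda>h. G \<bullet> h) \<circ> (\<lambda>s. s *\<^sub>R v)) = (*) (G \<bullet> v)"
    by (auto simp: fun_eq_iff o_def)
  ultimately show ?thesis by (simp add: has_field_derivative_def o_def)
qed

lemma measurable_gradient:
  fixes u :: "'a::euclidean_space \<Rightarrow> real" and g :: "'a \<Rightarrow> 'a"
  assumes cont: "continuous_on (ball 0 1) u"
    and der: "\<And>x. x \<in> ball 0 1 - N \<Longrightarrow> (u has_derivative (\<lambda>h. g x \<bullet> h)) (at x)"
  obtains g' where "g' \<in> borel_measurable borel" "\<And>x. x \<in> ball 0 1 - N \<Longrightarrow> g' x = g x"
proof -
  define v where "v x = indicator (ball (0::'a) 1) x *\<^sub>R u x" for x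
  have vm[measurable]: "v \<in> borel_measurable borel"
    unfolding v_def by (rule borel_measurable_continuous_on_indicator[OF _ cont]) auto
  define D where "D b x = lim (\<lambda>n. real (Suc n) * (v (x + inverse (real (Suc n)) *\<^sub>R b) - v x))" for b x
  have Dm[measurable]: "D b \<in> borel_measurable borel" for b
    unfolding D_def by measurable
  define g' where "g' x = (\<Sum>b\<in>Basis. D b x *\<^sub>R b)" for x
  have "g' \<in> borel_measurable borel" unfolding g'_def by measurable
  moreover have "g' x = g x" if x: "x \<in> ball 0 1 - N" for x
  proof -
    have "D b x = g x \<bullet> b" for b
    proof -
      let ?\<phi> = "\<lambda>t. u (x + t *\<^sub>R b)"
      have "(?\<phi> has_real_derivative (g x \<bullet> b)) (at 0)"
        using line_deriv[of u "g x" x 0 b] der[OF x] by simp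
      then have lim0: "((\<lambda>y. (?\<phi> y - ?\<phi> 0) / (y - 0)) \<longlongrightarrow> g x \<bullet> b) (at 0)"
        by (simp add: has_field_derivative_iff)
      have fl: "filterlim (\<lambda>n. inverse (real (Suc n))) (at 0) sequentially"
        unfolding filterlim_at using LIMSEQ_inverse_real_of_nat by auto
      have seq: "((\<lambda>n. (?\<phi> (inverse (real (Suc n))) - ?\<phi> 0) / (inverse (real (Suc n)) - 0)) \<longlongrightarrow> g x \<bullet> b) sequentially"
        by (rule filterlim_compose[OF lim0 fl])
      obtain e where e: "e > 0" "ball x e \<subseteq> ball 0 1" using x by (meson DiffD1 open_ball openE)
      have ev: "eventually (\<lambda>n. (?\<phi> (inverse (real (Suc n))) - ?\<phi> 0) / (inverse (real (Suc n)) - 0)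
              = real (Suc n) * (v (x + inverse (real (Suc n)) *\<^sub>R b) - v x)) sequentially"
      proof -
        obtain n0 where n0: "inverse (real (Suc n0)) < e / (norm b + 1)"
          using reals_Archimedean[of "e / (norm b + 1)"] e by (auto simp: add_nonneg_pos)
        have "(?\<phi> (inverse (real (Suc n))) - ?\<phi> 0) / (inverse (real (Suc n)) - 0)
              = real (Suc n) * (v (x + inverse (real (Suc n)) *\<^sub>R b) - v x)" if "n \<ge> n0" for n
        proof -
          have "inverse (real (Suc n)) \<le> inverse (real (Suc n0))" using that by (simp add: field_simps)
          then have i: "inverse (real (Suc n)) < e / (norm b + 1)" using n0 by linarith
          have "norm (inverse (real (Suc n)) *\<^sub>R b) = inverse (real (Suc n)) * norm b" by simp
          also have "\<dots> \<le> inverse (real (Suc n)) * (norm b + 1)" by (simp add: mult_left_mono)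
          also have "\<dots> < e" using i pos_less_divide_eq[of "norm b + 1"] by (simp add: add_nonneg_pos)
          finally have "x + inverse (real (Suc n)) *\<^sub>R b \<in> ball x e" by (simp add: dist_norm)
          then have "x + inverse (real (Suc n)) *\<^sub>R b \<in> ball 0 1" using e by auto
          then have "v (x + inverse (real (Suc n)) *\<^sub>R b) = u (x + inverse (real (Suc n)) *\<^sub>R b)"
            by (simp add: v_def)
          moreover have "v x = u x" using x by (simp add: v_def)
          ultimately show ?thesis by (simp add: divide_inverse mult.commute)
        qed
        then show ?thesis unfolding eventually_sequentially by blast
      qed
      have "((\<lambda>n. real (Suc n) * (v (x + inverse (real (Suc n)) *\<^sub>R b) - v x)) \<longlongrightarrow> g x \<bullet> b) sequentially"
        using Lim_transform_eventually[OF seq ev] .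
      then show ?thesis unfolding D_def by (rule limI)
    qed
    then show ?thesis by (simp add: g'_def euclidean_representation)
  qed
  ultimately show ?thesis using that by blast
qed




lemma seg_in_ball:
  fixes x y :: "'a::euclidean_space"
  assumes "x \<in> ball 0 1" "y \<in> ball 0 1" "t \<in> {0..1}"
  shows "x + t *\<^sub>R (y - x) \<in> ball 0 1"
proof -
  have "x + t *\<^sub>R (y - x) = (1 - t) *\<^sub>R x + t *\<^sub>R y" by (simp add: algebra_simps)
  also have "\<dots> \<in> closed_segment x y" using assms(3) by (auto simp: closed_segment_def)
  also have "closed_segment x y \<subseteq> ball 0 1" using assms by (intro closed_segment_subset) auto
  finally show ?thesis .
qed

lemma seg_bound:
  fixes u :: "'a::euclidean_space \<Rightarrow> real" and g' :: "'a \<Rightarrow> 'a"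
  assumes lip: "K-lipschitz_on (ball 0 1) u"
    and gm[measurable]: "g' \<in> borel_measurable borel"
    and der: "\<And>z. z \<in> ball 0 1 - N \<Longrightarrow> (u has_derivative (\<lambda>h. g' z \<bullet> h)) (at z)"
    and bnd: "\<And>z. z \<in> ball 0 1 - N \<Longrightarrow> norm (g' z) \<le> L0"
    and x: "x \<in> ball 0 1" and y: "y \<in> ball 0 1"
    and Z: "{t \<in> {0..1}. x + t *\<^sub>R (y - x) \<in> N} \<in> null_sets lborel"
  shows "ennreal \<bar>u y - u x\<bar> \<le> (\<integral>\<^sup>+t. indicator {0..1} t * (indicator (ball 0 1) (x + t *\<^sub>R (y - x)) * ennreal (norm (g' (x + t *\<^sub>R (y - x))))) \<partial>lborel) * ennreal (norm (y - x))"
    and "L0 \<ge> 0 \<Longrightarrow> \<bar>u y - u x\<bar> \<le> L0 * norm (y - x)"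
proof -
  have ballm[measurable]: "ball (0::'a) 1 \<in> sets borel" by simp
  define p where "p t = x + t *\<^sub>R (y - x)" for t
  define \<phi> where "\<phi> t = u (p t)" for t
  define \<phi>' where "\<phi>' t = g' (p t) \<bullet> (y - x)" for t
  define Z' where "Z' = {t \<in> {0..1}. p t \<in> N}"
  have Z': "Z' \<in> null_sets lborel" using Z by (simp add: Z'_def p_def)
  have pB: "t \<in> {0..1} \<Longrightarrow> p t \<in> ball 0 1" for t using seg_in_ball[OF x y] by (simp add: p_def)
  have K0: "0 \<le> K" using lip by (simp add: lipschitz_on_def)
  have lipp: "(K * norm (y - x))-lipschitz_on {0..1} \<phi>"
  proof (rule lipschitz_onI)
    fix s t :: real assume st: "s \<in> {0..1}" "t \<in> {0..1}"
    have "dist (\<phi> s) (\<phi> t) \<le> K * dist (p s) (p t)"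
      unfolding \<phi>_def by (rule lipschitz_onD[OF lip pB[OF st(1)] pB[OF st(2)]])
    also have "dist (p s) (p t) = \<bar>s - t\<bar> * norm (y - x)"
      by (simp add: p_def dist_norm scaleR_diff_left[symmetric])
    finally show "dist (\<phi> s) (\<phi> t) \<le> K * norm (y - x) * dist s t" by (simp add: dist_real_def mult_ac)
  qed (use K0 in simp)
  have derp: "(\<phi> has_real_derivative \<phi>' t) (at t)" if t: "t \<in> {0<..<1} - Z'" for t
  proof -
    have "p t \<in> ball 0 1 - N" using t pB[of t] by (auto simp: Z'_def)
    from der[OF this] show ?thesis
      unfolding \<phi>_def \<phi>'_def p_def by (rule line_deriv)
  qed
  have \<phi>'m: "\<phi>' \<in> borel_measurable borel" unfolding \<phi>'_def p_def by measurable
  have main: "ennreal \<bar>\<phi> 1 - \<phi> 0\<bar> \<le> (\<integral>\<^sup>+t. indicator {0..1} t * ennreal \<bar>\<phi>' t\<bar> \<partial>lborel)"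
    by (rule seg_ftc[OF Z' lipp derp \<phi>'m])
  have e: "\<phi> 1 = u y" "\<phi> 0 = u x" by (simp_all add: \<phi>_def p_def)
  have "(\<integral>\<^sup>+t. indicator {0..1} t * ennreal \<bar>\<phi>' t\<bar> \<partial>lborel)
      \<le> (\<integral>\<^sup>+t. indicator {0..1} t * (indicator (ball 0 1) (p t) * ennreal (norm (g' (p t)))) * ennreal (norm (y - x)) \<partial>lborel)"
  proof (rule nn_integral_mono)
    fix t :: real
    show "indicator {0..1} t * ennreal \<bar>\<phi>' t\<bar> \<le> indicator {0..1} t * (indicator (ball 0 1) (p t) * ennreal (norm (g' (p t)))) * ennreal (norm (y - x))"
    proof (cases "t \<in> {0..1}")
      case True
      have "\<bar>\<phi>' t\<bar> \<le> norm (g' (p t)) * norm (y - x)" unfolding \<phi>'_def by (rule Cauchy_Schwarz_ineq2)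
      then show ?thesis using True pB[OF True] by (simp add: ennreal_mult[symmetric] ennreal_leI)
    qed simp
  qed
  also have "\<dots> = (\<integral>\<^sup>+t. indicator {0..1} t * (indicator (ball 0 1) (p t) * ennreal (norm (g' (p t)))) \<partial>lborel) * ennreal (norm (y - x))"
    by (rule nn_integral_multc) (unfold p_def, measurable)
  finally show "ennreal \<bar>u y - u x\<bar> \<le> (\<integral>\<^sup>+t. indicator {0..1} t * (indicator (ball 0 1) (x + t *\<^sub>R (y - x)) * ennreal (norm (g' (x + t *\<^sub>R (y - x))))) \<partial>lborel) * ennreal (norm (y - x))"
    using main e by (simp add: p_def)
  assume L0: "L0 \<ge> 0"
  have "(\<integral>\<^sup>+t. indicator {0..1} t * ennreal \<bar>\<phi>' t\<bar> \<partial>lborel) \<le> (\<integral>\<^sup>+(t::real). indicator {0..1} t * ennreal (L0 * norm (y - x)) \<partial>lborel)"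
  proof (rule nn_integral_mono_AE)
    show "AE t in lborel. indicator {0..1} t * ennreal \<bar>\<phi>' t\<bar> \<le> indicator {0..1} t * ennreal (L0 * norm (y - x))"
      using AE_not_in[OF Z']
    proof eventually_elim
      fix t assume t: "t \<notin> Z'"
      show "indicator {0..1} t * ennreal \<bar>\<phi>' t\<bar> \<le> indicator {0..1} t * ennreal (L0 * norm (y - x))"
      proof (cases "t \<in> {0..1}")
        case True
        then have "p t \<in> ball 0 1 - N" using t pB[OF True] by (auto simp: Z'_def)
        then have "norm (g' (p t)) \<le> L0" by (rule bnd)
        then have "\<bar>\<phi>' t\<bar> \<le> L0 * norm (y - x)" unfolding \<phi>'_def
          using Cauchy_Schwarz_ineq2[of "g' (p t)" "y - x"] by (meson mult_right_mono norm_ge_zero order_trans)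
        then show ?thesis using True by (simp add: ennreal_leI)
      qed simp
    qed
  qed
  also have "\<dots> = ennreal (L0 * norm (y - x))"
    by (subst nn_integral_multc) auto
  finally have "ennreal \<bar>u y - u x\<bar> \<le> ennreal (L0 * norm (y - x))" using main e by simp
  then show "\<bar>u y - u x\<bar> \<le> L0 * norm (y - x)" using L0 by (simp add: ennreal_le_iff)
qed




lemma affine_null_integral:
  fixes N :: "'a::euclidean_space set"
  assumes N: "N \<in> null_sets lborel" and t: "t \<noteq> 0"
  shows "(\<integral>\<^sup>+y. indicator N (c + t *\<^sub>R y) \<partial>lborel) = 0"
proof -
  have Ns[measurable]: "N \<in> sets borel" using N by (auto simp: null_sets_def)
  have "0 = emeasure lborel N" using N by auto
  also have "\<dots> = (\<integral>\<^sup>+z. indicator N z \<partial>lborel)" by simp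
  also have "\<dots> = (\<integral>\<^sup>+z. indicator N z \<partial>density (distr lborel borel (\<lambda>y. c + t *\<^sub>R y)) (\<lambda>_. \<bar>t\<bar>^DIM('a)))"
    using lborel_affine[OF t, of c] by simp
  also have "\<dots> = (\<integral>\<^sup>+y. ennreal (\<bar>t\<bar>^DIM('a)) * indicator N (c + t *\<^sub>R y) \<partial>lborel)"
    by (subst nn_integral_density) (auto simp: nn_integral_distr)
  also have "\<dots> = ennreal (\<bar>t\<bar>^DIM('a)) * (\<integral>\<^sup>+y. indicator N (c + t *\<^sub>R y) \<partial>lborel)"
    by (rule nn_integral_cmult) measurable
  finally show ?thesis using t by simp
qed

lemma seg_null:
  fixes N :: "'a::euclidean_space set" and x :: 'a
  assumes N: "N \<in> null_sets lborel"
  shows "AE y in lborel. {t \<in> {0..1}. x + t *\<^sub>R (y - x) \<in> N} \<in> null_sets lborel"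
proof -
  have Ns[measurable]: "N \<in> sets borel" using N by (auto simp: null_sets_def)
  define F where "F y t = (indicator {0<..<1} t * indicator N (x + t *\<^sub>R (y - x)) :: ennreal)" for y :: 'a and t :: real
  have Fm: "case_prod F \<in> borel_measurable (lborel \<Otimes>\<^sub>M lborel)"
    unfolding F_def by measurable
  have "(\<integral>\<^sup>+t. (\<integral>\<^sup>+y. F y t \<partial>lborel) \<partial>lborel) = (\<integral>\<^sup>+(t::real). 0 \<partial>lborel)"
  proof (rule nn_integral_cong)
    fix t :: real
    show "(\<integral>\<^sup>+y. F y t \<partial>lborel) = 0"
    proof (cases "t \<in> {0<..<1}")
      case True
      have "(\<integral>\<^sup>+y. F y t \<partial>lborel) = (\<integral>\<^sup>+y. indicator N ((x - t *\<^sub>R x) + t *\<^sub>R y) \<partial>lborel)"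
        using True by (intro nn_integral_cong) (simp add: F_def algebra_simps)
      also have "\<dots> = 0" using True by (intro affine_null_integral[OF N]) auto
      finally show ?thesis .
    qed (simp add: F_def)
  qed
  then have "(\<integral>\<^sup>+y. (\<integral>\<^sup>+t. F y t \<partial>lborel) \<partial>lborel) = 0"
    using lborel_pair.Fubini'[OF Fm] by simp
  then have "AE y in lborel. (\<integral>\<^sup>+t. F y t \<partial>lborel) = 0"
    by (subst (asm) nn_integral_0_iff_AE) (use Fm in measurable)
  then show ?thesis
  proof eventually_elim
    fix y assume y: "(\<integral>\<^sup>+t. F y t \<partial>lborel) = 0"
    define S where "S = {t \<in> {0<..<1}. x + t *\<^sub>R (y - x) \<in> N}"
    have Ss: "S \<in> sets borel" unfolding S_def by measurable
    have "(\<integral>\<^sup>+t. F y t \<partial>lborel) = (\<integral>\<^sup>+t. indicator S t \<partial>lborel)"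
      by (intro nn_integral_cong) (simp add: F_def S_def indicator_def)
    also have "\<dots> = emeasure lborel S" using Ss by (intro nn_integral_indicator) simp
    finally have "emeasure lborel S = (\<integral>\<^sup>+t. F y t \<partial>lborel)" ..
    then have "S \<in> null_sets lborel" using y Ss by auto
    moreover have "{0,1::real} \<in> null_sets lborel" by (rule finite_imp_null_set_lborel) simp
    ultimately have "S \<union> {0,1} \<in> null_sets lborel" by (rule null_sets.Un)
    moreover have "{t \<in> {0..1}. x + t *\<^sub>R (y - x) \<in> N} \<in> sets lborel" by measurable
    ultimately show "{t \<in> {0..1}. x + t *\<^sub>R (y - x) \<in> N} \<in> null_sets lborel"
      by (rule null_sets_subset) (auto simp: S_def)
  qed
qed




lemma nn_integral_translate:
  fixes f :: "'a::euclidean_space \<Rightarrow> ennreal"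
  assumes [measurable]: "f \<in> borel_measurable borel"
  shows "(\<integral>\<^sup>+y. f (c + y) \<partial>lborel) = (\<integral>\<^sup>+y. f y \<partial>lborel)"
proof -
  have "(\<integral>\<^sup>+y. f y \<partial>lborel) = (\<integral>\<^sup>+y. f y \<partial>distr lborel borel ((+) c))"
    by (simp add: lborel_distr_plus)
  also have "\<dots> = (\<integral>\<^sup>+y. f (c + y) \<partial>lborel)"
    by (subst nn_integral_distr) auto
  finally show ?thesis ..
qed

lemma radial_total:
  fixes s L0 :: real
  assumes s: "1/2 \<le> s" "s < 1" and L0: "L0 \<ge> 2"
  shows "(\<integral>\<^sup>+h. indicator (ball (0::'a::euclidean_space) 2) h * ennreal (min 2 (L0 * norm h) * norm h / norm h powr (real DIM('a) + 2 * s)) \<partial>lborel)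
    \<le> ennreal (1 / (1 - s) * real DIM('a) * measure lborel (ball (0::'a) 1)
                    * L0 powr (2 * s - 1) * ((2 - 2 * s) * ln (2 * L0) + 1))"
proof -
  have "(\<integral>\<^sup>+h. indicator (ball (0::'a::euclidean_space) 2) h * ennreal (min 2 (L0 * norm h) * norm h / norm h powr (real DIM('a) + 2 * s)) \<partial>lborel)
      = (\<integral>\<^sup>+r. indicator {0..<2} r * ennreal (real DIM('a) * measure lborel (ball (0::'a) 1) * r^(DIM('a)-1)) * ennreal (min 2 (L0 * r) * r / r powr (real DIM('a) + 2 * s)) \<partial>lborel)"
    by (rule polar_nn_integral[where f="\<lambda>r. ennreal (min 2 (L0 * r) * r / r powr (real DIM('a) + 2 * s))"]) auto
  also have "\<dots> \<le> ennreal (1 / (1 - s) * real DIM('a) * measure lborel (ball (0::'a) 1)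
                    * L0 powr (2 * s - 1) * ((2 - 2 * s) * ln (2 * L0) + 1))"
    by (rule radial_nn_bound[OF s L0]) (auto simp: DIM_positive Suc_le_eq)
  finally show ?thesis .
qed

theorem mainTheorem3:
  fixes u :: "'a::euclidean_space \<Rightarrow> real"
    and g :: "'a \<Rightarrow> 'a"
    and s L0 :: real
  assumes s_lo: "1/2 \<le> s" and s_hi: "s < 1"
    and L0: "L0 \<ge> 2"
    and lip: "\<exists>K. K-lipschitz_on (ball 0 1) u"
    and bnd: "\<And>x. x \<in> ball 0 1 \<Longrightarrow> \<bar>u x\<bar> \<le> 1"
    and grad: "AE x in lborel. x \<in> ball 0 1 \<longrightarrow> (u has_derivative (\<lambda>h. g x \<bullet> h)) (at x)"
    and grad_bnd: "AE x in lborel. x \<in> ball 0 1 \<longrightarrow> norm (g x) \<le> L0"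
  shows "(\<integral>\<^sup>+ x \<in> ball 0 1. (\<integral>\<^sup>+ y \<in> ball 0 1.
            ennreal (\<bar>u x - u y\<bar>^2 / norm (x - y) powr (real DIM('a) + 2 * s)) \<partial>lborel) \<partial>lborel)
         \<le> ennreal (1 / (1 - s) * real DIM('a) * measure lborel (ball (0::'a) 1)
                    * L0 powr (2 * s - 1) * ((2 - 2 * s) * ln (2 * L0) + 1))
           * (\<integral>\<^sup>+ x \<in> ball 0 1. ennreal (norm (g x)) \<partial>lborel)"
proof -
  have ballm[measurable]: "ball (0::'a) 1 \<in> sets borel" "ball (0::'a) 2 \<in> sets borel" by simp_all
  obtain K where lipK: "K-lipschitz_on (ball 0 1) u" using lip by blast
  have cont: "continuous_on (ball 0 1) u" using lipschitz_on_continuous_on[OF lipK] .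
  have "AE x in lborel. x \<in> ball 0 1 \<longrightarrow> (u has_derivative (\<lambda>h. g x \<bullet> h)) (at x) \<and> norm (g x) \<le> L0"
    using grad grad_bnd by eventually_elim auto
  then obtain N0 where N0: "{x \<in> space lborel. \<not> (x \<in> ball 0 1 \<longrightarrow> (u has_derivative (\<lambda>h. g x \<bullet> h)) (at x) \<and> norm (g x) \<le> L0)} \<subseteq> N0"
      "emeasure lborel N0 = 0" "N0 \<in> sets lborel"
    by (rule AE_E)
  have N0null: "N0 \<in> null_sets lborel" using N0 by auto
  have P: "(u has_derivative (\<lambda>h. g x \<bullet> h)) (at x) \<and> norm (g x) \<le> L0" if "x \<in> ball 0 1 - N0" for x
    using that N0(1) by auto
  obtain g' where g'm[measurable]: "g' \<in> borel_measurable borel" and g'eq: "\<And>x. x \<in> ball 0 1 - N0 \<Longrightarrow> g' x = g x"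
    using measurable_gradient[OF cont, of N0 g] P by blast
  have der': "(u has_derivative (\<lambda>h. g' z \<bullet> h)) (at z)" if "z \<in> ball 0 1 - N0" for z
    using P[OF that] g'eq[OF that] by simp
  have bnd': "norm (g' z) \<le> L0" if "z \<in> ball 0 1 - N0" for z
    using P[OF that] g'eq[OF that] by simp
  define Gb where "Gb z = indicator (ball (0::'a) 1) z * ennreal (norm (g' z))" for z
  have Gbm[measurable]: "Gb \<in> borel_measurable borel" unfolding Gb_def by measurable
  define Kf where "Kf h = ennreal (min 2 (L0 * norm h) * norm h / norm h powr (real DIM('a) + 2 * s))" for h :: 'a
  have Kfm[measurable]: "Kf \<in> borel_measurable borel" unfolding Kf_def by measurable
  define F where "F x h = indicator (ball (0::'a) 2) h * Kf h * (\<integral>\<^sup>+t. indicator {0..1::real} t * Gb (x + t *\<^sub>R h) \<partial>lborel)" for x h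
  have Fm: "case_prod F \<in> borel_measurable (lborel \<Otimes>\<^sub>M lborel)"
    unfolding F_def by measurable
  define C where "C = 1 / (1 - s) * real DIM('a) * measure lborel (ball (0::'a) 1)
                    * L0 powr (2 * s - 1) * ((2 - 2 * s) * ln (2 * L0) + 1)"
  have step1: "(\<integral>\<^sup>+ x \<in> ball 0 1. (\<integral>\<^sup>+ y \<in> ball 0 1.
            ennreal (\<bar>u x - u y\<bar>^2 / norm (x - y) powr (real DIM('a) + 2 * s)) \<partial>lborel) \<partial>lborel)
      \<le> (\<integral>\<^sup>+x. (\<integral>\<^sup>+y. F x (y - x) \<partial>lborel) \<partial>lborel)"
  proof (rule nn_integral_mono)
    fix x :: 'a
    show "(\<integral>\<^sup>+ y \<in> ball 0 1. ennreal (\<bar>u x - u y\<bar>^2 / norm (x - y) powr (real DIM('a) + 2 * s)) \<partial>lborel) * indicator (ball 0 1) x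
        \<le> (\<integral>\<^sup>+y. F x (y - x) \<partial>lborel)"
    proof (cases "x \<in> ball 0 1")
      case xB: True
      have "(\<integral>\<^sup>+ y \<in> ball 0 1. ennreal (\<bar>u x - u y\<bar>^2 / norm (x - y) powr (real DIM('a) + 2 * s)) \<partial>lborel)
          \<le> (\<integral>\<^sup>+y. F x (y - x) \<partial>lborel)"
      proof (rule nn_integral_mono_AE)
        show "AE y in lborel. ennreal (\<bar>u x - u y\<bar>^2 / norm (x - y) powr (real DIM('a) + 2 * s)) * indicator (ball 0 1) y
            \<le> F x (y - x)"
          using seg_null[OF N0null, of x]
        proof eventually_elim
          fix y assume Z: "{t \<in> {0..1}. x + t *\<^sub>R (y - x) \<in> N0} \<in> null_sets lborel"
          show "ennreal (\<bar>u x - u y\<bar>^2 / norm (x - y) powr (real DIM('a) + 2 * s)) * indicator (ball 0 1) y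
            \<le> F x (y - x)"
          proof (cases "y \<in> ball 0 1")
            case yB: True
            define I where "I = (\<integral>\<^sup>+t. indicator {0..1} t * (indicator (ball 0 1) (x + t *\<^sub>R (y - x)) * ennreal (norm (g' (x + t *\<^sub>R (y - x))))) \<partial>lborel)"
            define q where "q = \<bar>u x - u y\<bar>"
            define r where "r = norm (x - y)"
            define P where "P = r powr (real DIM('a) + 2 * s)"
            define m where "m = min 2 (L0 * r)"
            have ryx: "norm (y - x) = r" by (simp add: r_def norm_minus_commute)
            have qyx: "\<bar>u y - u x\<bar> = q" unfolding q_def by (rule abs_minus_commute)
            have E1: "ennreal q \<le> I * ennreal r"
              using seg_bound(1)[OF lipK g'm der' bnd' xB yB Z] unfolding I_def qyx ryx .
            have E2: "q \<le> L0 * r"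
              using seg_bound(2)[OF lipK g'm der' bnd' xB yB Z] L0 unfolding qyx ryx by simp
            have q2: "q \<le> 2" using bnd[OF xB] bnd[OF yB] by (simp add: q_def)
            have q0: "0 \<le> q" by (simp add: q_def)
            have r0: "0 \<le> r" by (simp add: r_def)
            have P0: "0 \<le> P" by (simp add: P_def)
            have m0: "0 \<le> m" using r0 L0 by (simp add: m_def)
            have qm: "q \<le> m" using E2 q2 by (simp add: m_def)
            have "q^2 / P \<le> q * (m / P)"
            proof -
              have "q^2 = q * q" by (simp add: power2_eq_square)
              also have "\<dots> \<le> q * m" using qm q0 by (rule mult_left_mono)
              finally have "q^2 / P \<le> q * m / P" using P0 by (rule divide_right_mono)
              then show ?thesis by simp
            qed
            then have "ennreal (q^2 / P) \<le> ennreal (q * (m / P))" by (rule ennreal_leI)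
            also have "\<dots> = ennreal q * ennreal (m / P)" using q0 by (rule ennreal_mult')
            also have "\<dots> \<le> (I * ennreal r) * ennreal (m / P)"
              by (rule mult_right_mono[OF E1]) simp
            also have "\<dots> = ennreal (m * r / P) * I"
            proof -
              have "ennreal r * ennreal (m / P) = ennreal (m * r / P)"
                using r0 m0 P0 by (simp add: ennreal_mult[symmetric])
              then show ?thesis by (simp add: mult_ac)
            qed
            also have "\<dots> = F x (y - x)"
            proof -
              have "norm x < 1" "norm y < 1" using xB yB by auto
              moreover have "norm (y - x) \<le> norm y + norm x" by (rule norm_triangle_ineq4)
              ultimately have "norm (y - x) < 2" by linarith
              then have i2: "indicator (ball (0::'a) 2) (y - x) = (1::ennreal)" by simp
              have iI: "I = (\<integral>\<^sup>+t. indicator {0..1::real} t * Gb (x + t *\<^sub>R (y - x)) \<partial>lborel)"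
                unfolding I_def Gb_def ..
              have kK: "Kf (y - x) = ennreal (m * r / P)" unfolding Kf_def ryx m_def P_def ..
              show ?thesis unfolding F_def i2 kK iI by simp
            qed
            finally have fin: "ennreal (q^2 / P) \<le> F x (y - x)" .
            have "ennreal (\<bar>u x - u y\<bar>^2 / norm (x - y) powr (real DIM('a) + 2 * s)) * indicator (ball 0 1) y = ennreal (q^2 / P)"
              using yB by (simp add: q_def r_def P_def)
            then show ?thesis using fin by simp
          qed simp
        qed
      qed
      then show ?thesis using xB by simp
    qed simp
  qed
  have step2: "(\<integral>\<^sup>+y. F x (y - x) \<partial>lborel) = (\<integral>\<^sup>+h. F x h \<partial>lborel)" for x
    using nn_integral_translate[of "F x" "- x"] Fm by simp
  have J: "(\<integral>\<^sup>+x. (\<integral>\<^sup>+t. indicator {0..1::real} t * Gb (x + t *\<^sub>R h) \<partial>lborel) \<partial>lborel) = integral\<^sup>N lborel Gb" for h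
  proof -
    define f where "f t x = indicator {0..1::real} t * Gb (x + t *\<^sub>R h)" for t x
    have fm: "case_prod f \<in> borel_measurable (lborel \<Otimes>\<^sub>M lborel)" unfolding f_def by measurable
    have "(\<integral>\<^sup>+x. (\<integral>\<^sup>+t. f t x \<partial>lborel) \<partial>lborel) = (\<integral>\<^sup>+t. (\<integral>\<^sup>+x. f t x \<partial>lborel) \<partial>lborel)"
      by (rule lborel_pair.Fubini'[OF fm])
    also have "\<dots> = (\<integral>\<^sup>+t. indicator {0..1::real} t * integral\<^sup>N lborel Gb \<partial>lborel)"
    proof (rule nn_integral_cong)
      fix t :: real
      have "(\<integral>\<^sup>+x. f t x \<partial>lborel) = indicator {0..1::real} t * (\<integral>\<^sup>+x. Gb (t *\<^sub>R h + x) \<partial>lborel)"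
        unfolding f_def by (subst nn_integral_cmult[symmetric]) (auto simp: add.commute)
      also have "\<dots> = indicator {0..1::real} t * integral\<^sup>N lborel Gb"
        by (subst nn_integral_translate) auto
      finally show "(\<integral>\<^sup>+x. f t x \<partial>lborel) = indicator {0..1::real} t * integral\<^sup>N lborel Gb" .
    qed
    also have "\<dots> = integral\<^sup>N lborel Gb"
      by (subst nn_integral_multc) auto
    finally show ?thesis unfolding f_def .
  qed
  have step3: "(\<integral>\<^sup>+x. (\<integral>\<^sup>+h. F x h \<partial>lborel) \<partial>lborel)
      = (\<integral>\<^sup>+h. indicator (ball (0::'a) 2) h * Kf h \<partial>lborel) * integral\<^sup>N lborel Gb"
  proof -
    have "(\<integral>\<^sup>+x. (\<integral>\<^sup>+h. F x h \<partial>lborel) \<partial>lborel) = (\<integral>\<^sup>+h. (\<integral>\<^sup>+x. F x h \<partial>lborel) \<partial>lborel)"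
      by (rule lborel_pair.Fubini'[OF Fm, symmetric])
    also have "\<dots> = (\<integral>\<^sup>+h. indicator (ball (0::'a) 2) h * Kf h * integral\<^sup>N lborel Gb \<partial>lborel)"
    proof (rule nn_integral_cong)
      fix h :: 'a
      show "(\<integral>\<^sup>+x. F x h \<partial>lborel) = indicator (ball (0::'a) 2) h * Kf h * integral\<^sup>N lborel Gb"
        unfolding F_def by (subst nn_integral_cmult) (auto simp: J)
    qed
    also have "\<dots> = (\<integral>\<^sup>+h. indicator (ball (0::'a) 2) h * Kf h \<partial>lborel) * integral\<^sup>N lborel Gb"
      by (rule nn_integral_multc) measurable
    finally show ?thesis .
  qed
  have step4: "(\<integral>\<^sup>+h. indicator (ball (0::'a) 2) h * Kf h \<partial>lborel) \<le> ennreal C"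
    unfolding Kf_def C_def by (rule radial_total[OF s_lo s_hi L0])
  have step5: "integral\<^sup>N lborel Gb = (\<integral>\<^sup>+ x \<in> ball 0 1. ennreal (norm (g x)) \<partial>lborel)"
  proof (rule nn_integral_cong_AE)
    show "AE x in lborel. Gb x = ennreal (norm (g x)) * indicator (ball 0 1) x"
      using AE_not_in[OF N0null] by eventually_elim (auto simp: Gb_def g'eq indicator_def)
  qed
  have "(\<integral>\<^sup>+ x \<in> ball 0 1. (\<integral>\<^sup>+ y \<in> ball 0 1.
            ennreal (\<bar>u x - u y\<bar>^2 / norm (x - y) powr (real DIM('a) + 2 * s)) \<partial>lborel) \<partial>lborel)
      \<le> (\<integral>\<^sup>+h. indicator (ball (0::'a) 2) h * Kf h \<partial>lborel) * integral\<^sup>N lborel Gb"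
    using step1 step2 step3 by simp
  also have "\<dots> \<le> ennreal C * integral\<^sup>N lborel Gb"
    by (rule mult_right_mono[OF step4]) simp
  finally show ?thesis unfolding step5 C_def .
qed


end
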